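(* Let $\alpha>0$ and $\beta\in\mathbb{R}$ satisfy one of: $\beta<\alpha<1$; or $\beta<1<\alpha$; or $\beta<\alpha=1$. Then the essential norm of the generalized $\beta$-Ces\`aro operator $C_{g_\beta}:\mathcal{B}_\alpha^0\to\mathcal{B}_\alpha^0$ is $0$.
   Context: $\mathbb{D}=\{z\in\mathbb{C}:|z|<1\}$. For $\alpha>0$, the $\alpha$-Bloch space $\mathcal{B}_\alpha$ is the space of analytic functions $f$ on $\mathbb{D}$ with $\|f\|_{\mathcal{B}_\alpha}:=\sup_{z\in\mathbb{D}}(1-|z|^2)^\alpha|f'(z)|<\infty$. $\mathcal{B}_\alpha^0=\{f\in\mathcal{B}_\alpha: f(0)=0\}$, normed by $\|\cdot\|_{\mathcal{B}_\alpha}$. For $\beta\in\mathbb{R}$, let $g_\beta(w)=\sum_{j=1}^k\frac{a_j}{(1-b_jw)^\beta}+h(w)$, where $k\ge1$, $b_1,\dots,b_k$ are distinct points of the unit circle, $a_j\in\mathbb{C}$ with $|a_j|>0$, $h$ is a bounded analytic function on $\mathbb{D}$, and powers are principal branches; $C_{g_\beta}(f)(z)=\int_0^z\frac{f(w)g_\beta(w)}{w}\,dw$. The essential norm of a bounded operator $T:X\to Y$ is $\|T\|_e=\inf\{\|T+K\|: K \text{ compact}\}$. *)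

theory Defs
  imports "HOL-Complex_Analysis.Complex_Analysis" "HOL-Library.Extended_Real"
begin

text \<open>Functions on the unit disc are represented as total functions complex => complex;
only their values on the open unit disc matter.\<close>

abbreviation unit_disc :: "complex set" where
  "unit_disc \<equiv> ball 0 1"

definition bloch_norm :: "real \<Rightarrow> (complex \<Rightarrow> complex) \<Rightarrow> ereal" where
  "bloch_norm \<alpha> f = (SUP z\<in>unit_disc. ereal ((1 - (cmod z)\<^sup>2) powr \<alpha> * cmod (deriv f z)))"

definition bloch0 :: "real \<Rightarrow> (complex \<Rightarrow> complex) set" where
  "bloch0 \<alpha> = {f. f holomorphic_on unit_disc \<and> f 0 = 0 \<and> bloch_norm \<alpha> f < \<infinity>}"

definition op_norm :: "real \<Rightarrow> ((complex \<Rightarrow> complex) \<Rightarrow> (complex \<Rightarrow> complex)) \<Rightarrow> ereal" where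
  "op_norm \<alpha> T = (SUP f\<in>{f\<in>bloch0 \<alpha>. bloch_norm \<alpha> f \<le> 1}. bloch_norm \<alpha> (T f))"

definition compact_op :: "real \<Rightarrow> ((complex \<Rightarrow> complex) \<Rightarrow> (complex \<Rightarrow> complex)) \<Rightarrow> bool" where
  "compact_op \<alpha> K \<longleftrightarrow>
     (\<forall>f\<in>bloch0 \<alpha>. K f \<in> bloch0 \<alpha>) \<and>
     (\<forall>f\<in>bloch0 \<alpha>. \<forall>g\<in>bloch0 \<alpha>. (\<forall>z\<in>unit_disc. f z = g z) \<longrightarrow> (\<forall>z\<in>unit_disc. K f z = K g z)) \<and>
     (\<forall>f\<in>bloch0 \<alpha>. \<forall>g\<in>bloch0 \<alpha>. \<forall>z\<in>unit_disc. K (\<lambda>w. f w + g w) z = K f z + K g z) \<and>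
     (\<forall>f\<in>bloch0 \<alpha>. \<forall>c. \<forall>z\<in>unit_disc. K (\<lambda>w. c * f w) z = c * K f z) \<and>
     (\<forall>F. (\<forall>n::nat. F n \<in> bloch0 \<alpha> \<and> bloch_norm \<alpha> (F n) \<le> 1) \<longrightarrow>
        (\<exists>r g. strict_mono r \<and> g \<in> bloch0 \<alpha> \<and>
           ((\<lambda>n. bloch_norm \<alpha> (\<lambda>z. K (F (r n)) z - g z)) \<longlongrightarrow> 0) sequentially))"

definition ess_norm :: "real \<Rightarrow> ((complex \<Rightarrow> complex) \<Rightarrow> (complex \<Rightarrow> complex)) \<Rightarrow> ereal" where
  "ess_norm \<alpha> T = (INF K\<in>{K. compact_op \<alpha> K}. op_norm \<alpha> (\<lambda>f z. T f z + K f z))"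

definition g_beta :: "real \<Rightarrow> nat \<Rightarrow> (nat \<Rightarrow> complex) \<Rightarrow> (nat \<Rightarrow> complex) \<Rightarrow> (complex \<Rightarrow> complex)
    \<Rightarrow> complex \<Rightarrow> complex" where
  "g_beta \<beta> k a b h w = (\<Sum>j<k. a j / (1 - b j * w) powr (complex_of_real \<beta>)) + h w"

definition cesaro_op :: "(complex \<Rightarrow> complex) \<Rightarrow> (complex \<Rightarrow> complex) \<Rightarrow> complex \<Rightarrow> complex" where
  "cesaro_op g f z = contour_integral (linepath 0 z) (\<lambda>w. f w * g w / w)"

end

theory Submission
  imports Defs
begin


lemma re_pos_disc:
  fixes b w :: complex
  assumes "cmod b = 1" "cmod w < 1"
  shows "Re (1 - b * w) > 0" "1 - cmod w \<le> cmod (1 - b * w)" "cmod (1 - b * w) \<le> 2"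
proof -
  have "cmod (b*w) = cmod w" using assms by (simp add: norm_mult)
  moreover have "Re (b*w) \<le> cmod (b*w)" by (rule complex_Re_le_cmod)
  ultimately show "Re (1 - b * w) > 0" using assms by simp
  have "cmod 1 - cmod (b*w) \<le> cmod (1 - b*w)" by (rule norm_triangle_ineq2)
  then show "1 - cmod w \<le> cmod (1 - b * w)" using \<open>cmod (b*w) = cmod w\<close> by simp
  have "cmod (1 - b*w) \<le> cmod 1 + cmod (b*w)" by (rule norm_triangle_ineq4)
  then show "cmod (1 - b * w) \<le> 2" using \<open>cmod (b*w) = cmod w\<close> assms by simp
qed

lemma g_beta_holo:
  assumes "\<forall>j<k. cmod (b j) = 1" "h holomorphic_on unit_disc"
  shows "g_beta \<beta> k a b h holomorphic_on unit_disc"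
proof -
  have "(\<lambda>w. a j / (1 - b j * w) powr (complex_of_real \<beta>)) holomorphic_on unit_disc" if "j < k" for j
  proof (intro holomorphic_intros)
    fix w assume w: "w \<in> unit_disc"
    then have "Re (1 - b j * w) > 0" using re_pos_disc[of "b j" w] assms that by simp
    then show "1 - b j * w \<notin> \<real>\<^sub>\<le>\<^sub>0" by (auto simp: complex_nonpos_Reals_iff)
    then show "(1 - b j * w) powr (complex_of_real \<beta>) \<noteq> 0" by auto
  qed
  then show ?thesis unfolding g_beta_def[abs_def]
    by (intro holomorphic_on_add holomorphic_on_sum assms(2)) auto
qed

lemma term_bound:
  fixes b w :: complex and \<beta> :: real
  assumes "cmod b = 1" "cmod w < 1"
  shows "cmod (1 / (1 - b * w) powr (complex_of_real \<beta>)) \<le> 2 powr \<bar>\<beta>\<bar> * (1 - cmod w) powr (- max \<beta> 0)"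
proof -
  note R = re_pos_disc[OF assms]
  have nz: "1 - b * w \<noteq> 0"
  proof
    assume "1 - b * w = 0" then have "Re (1 - b*w) = 0" by (simp only: zero_complex.sel)
    with R(1) show False by linarith
  qed
  have eq: "cmod (1 / (1 - b * w) powr (complex_of_real \<beta>)) = cmod (1 - b*w) powr (- \<beta>)"
  proof -
    have "cmod (1 / (1 - b * w) powr (complex_of_real \<beta>)) = 1 / cmod ((1 - b * w) powr (complex_of_real \<beta>))"
      by (simp only: norm_divide norm_one)
    also have "cmod ((1 - b * w) powr (complex_of_real \<beta>)) = cmod (1 - b*w) powr \<beta>"
      by (simp only: norm_powr_real_powr' Reals_of_real Re_complex_of_real)
    finally show ?thesis by (simp only: powr_minus_divide)
  qed
  have p0: "0 < 1 - cmod w" using assms by simp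
  have c1: "cmod (1 - b*w) powr (- \<beta>) \<le> 2 powr \<bar>\<beta>\<bar> * (1 - cmod w) powr (- max \<beta> 0)"
  proof (cases "\<beta> \<ge> 0")
    case True
    have mx: "max \<beta> 0 = \<beta>" "\<bar>\<beta>\<bar> = \<beta>" using True by auto
    have "cmod (1 - b*w) powr (- \<beta>) \<le> (1 - cmod w) powr (- \<beta>)"
      by (rule powr_mono2'[OF _ p0 R(2)]) (use True in simp)
    also have "\<dots> = 1 * (1 - cmod w) powr (- \<beta>)" by simp
    also have "\<dots> \<le> 2 powr \<beta> * (1 - cmod w) powr (- \<beta>)"
      by (intro mult_right_mono ge_one_powr_ge_zero True) simp_all
    finally show ?thesis unfolding mx .
  next
    case False
    have mx: "max \<beta> 0 = 0" "\<bar>\<beta>\<bar> = - \<beta>" using False by auto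
    have "cmod (1 - b*w) powr (- \<beta>) \<le> 2 powr (-\<beta>)"
      by (rule powr_mono2[OF _ norm_ge_zero R(3)]) (use False in simp)
    also have "\<dots> = 2 powr (-\<beta>) * (1 - cmod w) powr (- 0)" using p0 by simp
    finally show ?thesis unfolding mx .
  qed
  show ?thesis using c1 eq by (rule ord_eq_le_trans[rotated])
qed



lemma g_beta_bound:
  assumes "\<forall>j<k. cmod (b j) = 1" "bounded (h ` unit_disc)"
  obtains A where "A \<ge> 0" "\<And>z. z \<in> unit_disc \<Longrightarrow> cmod (g_beta \<beta> k a b h z) \<le> A * (1 - cmod z) powr (- max \<beta> 0)"
proof -
  obtain Bh where Bh: "\<And>z. z \<in> unit_disc \<Longrightarrow> cmod (h z) \<le> Bh"
    using assms(2) unfolding bounded_iff by (meson imageI)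
  define A where "A = (\<Sum>j<k. cmod (a j)) * 2 powr \<bar>\<beta>\<bar> + max Bh 0"
  have "A \<ge> 0" unfolding A_def by (intro add_nonneg_nonneg mult_nonneg_nonneg sum_nonneg) auto
  moreover have "cmod (g_beta \<beta> k a b h z) \<le> A * (1 - cmod z) powr (- max \<beta> 0)" if z: "z \<in> unit_disc" for z
  proof -
    define P where "P = (1 - cmod z) powr (- max \<beta> 0)"
    have z1: "cmod z < 1" using z by simp
    have zp: "0 < 1 - cmod z" "1 - cmod z \<le> 1" using z1 by auto
    have "(1 - cmod z) powr max \<beta> 0 \<le> 1"
      using zp by (intro powr_le1) auto
    moreover have "(1 - cmod z) powr max \<beta> 0 > 0" using zp by simp
    ultimately have P1: "1 \<le> P" unfolding P_def by (simp add: powr_minus_divide)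
    have "cmod (\<Sum>j<k. a j / (1 - b j * z) powr (complex_of_real \<beta>)) \<le> (\<Sum>j<k. cmod (a j / (1 - b j * z) powr (complex_of_real \<beta>)))"
      by (rule norm_sum)
    also have "\<dots> \<le> (\<Sum>j<k. cmod (a j) * (2 powr \<bar>\<beta>\<bar> * P))"
    proof (rule sum_mono)
      fix j assume "j \<in> {..<k}"
      then have "cmod (b j) = 1" using assms(1) by auto
      have "cmod (a j / (1 - b j * z) powr (complex_of_real \<beta>)) = cmod (a j) * cmod (1 / (1 - b j * z) powr (complex_of_real \<beta>))"
        by (simp add: norm_divide)
      also have "\<dots> \<le> cmod (a j) * (2 powr \<bar>\<beta>\<bar> * P)" unfolding P_def
        by (intro mult_left_mono term_bound \<open>cmod (b j) = 1\<close> z1) auto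
      finally show "cmod (a j / (1 - b j * z) powr (complex_of_real \<beta>)) \<le> cmod (a j) * (2 powr \<bar>\<beta>\<bar> * P)" .
    qed
    also have "\<dots> = (\<Sum>j<k. cmod (a j)) * 2 powr \<bar>\<beta>\<bar> * P" by (simp add: sum_distrib_right mult.assoc)
    finally have 1: "cmod (\<Sum>j<k. a j / (1 - b j * z) powr (complex_of_real \<beta>)) \<le> (\<Sum>j<k. cmod (a j)) * 2 powr \<bar>\<beta>\<bar> * P" .
    have "max Bh 0 * 1 \<le> max Bh 0 * P" using P1 by (intro mult_left_mono) auto
    then have 2: "cmod (h z) \<le> max Bh 0 * P" using Bh[OF z] by linarith
    have "cmod (g_beta \<beta> k a b h z) \<le> cmod (\<Sum>j<k. a j / (1 - b j * z) powr (complex_of_real \<beta>)) + cmod (h z)"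
      unfolding g_beta_def by (rule norm_triangle_ineq)
    also have "\<dots> \<le> (\<Sum>j<k. cmod (a j)) * 2 powr \<bar>\<beta>\<bar> * P + max Bh 0 * P" using 1 2 by linarith
    also have "\<dots> = A * P" unfolding A_def by (simp only: distrib_right)
    finally show ?thesis unfolding P_def .
  qed
  ultimately show ?thesis using that by blast
qed



lemma bloch_pointwise:
  assumes "bloch_norm \<alpha> f \<le> ereal M" "w \<in> unit_disc"
  shows "(1 - (cmod w)\<^sup>2) powr \<alpha> * cmod (deriv f w) \<le> M"
  using assms unfolding bloch_norm_def by (simp add: SUP_le_iff)

lemma growth:
  fixes f :: "complex \<Rightarrow> complex"
  assumes hol: "f holomorphic_on unit_disc" and f0: "f 0 = 0" and bn: "bloch_norm \<alpha> f \<le> ereal M"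
    and d0: "0 < \<delta>" and da: "\<delta> < \<alpha>" and d1: "\<delta> \<le> 1" and z: "z \<in> unit_disc"
  shows "cmod (f z) \<le> M / (\<alpha> - \<delta>) * (1 - cmod z) powr (\<delta> - \<alpha>)"
proof -
  have M0: "0 \<le> M"
    using bloch_pointwise[OF bn, of 0] by (simp) (meson norm_ge_zero order_trans)
  have dbound: "cmod (deriv f w) \<le> M * (1 - cmod w) powr (- \<alpha>)" if w: "w \<in> unit_disc" for w
  proof -
    have w1: "cmod w < 1" using w by simp
    have pos: "0 < 1 - cmod w" using w1 by simp
    have "1 - cmod w \<le> 1 - (cmod w)\<^sup>2"
      using w1 by (simp add: power2_eq_square mult_le_cancel_right1 mult_left_le_one_le)
    then have le: "(1 - cmod w) powr \<alpha> \<le> (1 - (cmod w)\<^sup>2) powr \<alpha>"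
      using pos da d0 by (intro powr_mono2) auto
    have "(1 - cmod w) powr \<alpha> * cmod (deriv f w) \<le> M"
      using bloch_pointwise[OF bn w] le by (meson mult_right_mono norm_ge_zero order_trans)
    moreover have "(1 - cmod w) powr \<alpha> > 0" using pos by simp
    ultimately show ?thesis by (simp add: powr_minus_divide field_simps)
  qed
  show ?thesis
  proof (cases "z = 0")
    case True
    then show ?thesis using f0 M0 da by simp
  next
    case False
    define \<rho> where "\<rho> = cmod z"
    have \<rho>: "0 < \<rho>" "\<rho> < 1" using False z by (auto simp: \<rho>_def)
    define u where "u = (\<lambda>t::real. f (of_real t * z))"
    define \<phi> where "\<phi> = (\<lambda>t::real. M / (\<alpha> - \<delta>) * (1 - t * \<rho>) powr (\<delta> - \<alpha>))"
    define \<phi>' where "\<phi>' = (\<lambda>t::real. M * \<rho> * (1 - t * \<rho>) powr (\<delta> - \<alpha> - 1))"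
    have inD: "of_real t * z \<in> unit_disc" if "0 \<le> t" "t \<le> 1" for t
    proof -
      have "cmod (of_real t * z) = t * \<rho>" using that by (simp add: norm_mult \<rho>_def)
      also have "\<dots> \<le> \<rho>" using that \<rho> by (simp add: mult_left_le_one_le)
      finally show ?thesis using \<rho> by simp
    qed
    have ud: "(u has_vector_derivative (deriv f (of_real t * z) * z)) (at t)" if "0 \<le> t" "t \<le> 1" for t
    proof -
      have "((\<lambda>x. f (x * z)) has_field_derivative (deriv f (of_real t * z) * z)) (at (of_real t))"
        using holomorphic_derivI[OF hol _ inD[OF that], of UNIV]
        by (auto intro!: derivative_eq_intros DERIV_chain2[where f = f])
      then show ?thesis unfolding u_def by (rule has_vector_derivative_real_field)
    qed
    have pos: "0 < 1 - t * \<rho>" if "t \<le> 1" for t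
    proof -
      have "t * \<rho> \<le> 1 * \<rho>" using that \<rho> by (intro mult_right_mono) auto
      then show ?thesis using \<rho> by linarith
    qed
    have phid: "(\<phi> has_vector_derivative \<phi>' t) (at t)" if "t \<le> 1" for t
    proof -
      have "((\<lambda>x. 1 - x * \<rho>) has_real_derivative (- \<rho>)) (at t)"
        by (auto intro!: derivative_eq_intros)
      from DERIV_fun_powr[OF this pos[OF that], of "\<delta> - \<alpha>"]
      have "((\<lambda>x. (1 - x * \<rho>) powr (\<delta> - \<alpha>)) has_real_derivative
              (\<delta> - \<alpha>) * (1 - t * \<rho>) powr (\<delta> - \<alpha> - 1) * (- \<rho>)) (at t)" by simp
      from DERIV_cmult[OF this, of "M / (\<alpha> - \<delta>)"]
      have "(\<phi> has_real_derivative M / (\<alpha> - \<delta>) * ((\<delta> - \<alpha>) * (1 - t * \<rho>) powr (\<delta> - \<alpha> - 1) * (- \<rho>))) (at t)"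
        unfolding \<phi>_def .
      moreover have "M / (\<alpha> - \<delta>) * ((\<delta> - \<alpha>) * (1 - t * \<rho>) powr (\<delta> - \<alpha> - 1) * (- \<rho>)) = \<phi>' t"
        unfolding \<phi>'_def using da by (simp add: field_simps)
      ultimately have "(\<phi> has_real_derivative \<phi>' t) (at t)" by simp
      then show ?thesis by (simp add: has_real_derivative_iff_has_vector_derivative)
    qed
    have "cmod (u 1 - u 0) \<le> \<phi> 1 - \<phi> 0"
    proof (rule differentiable_bound_general[where f' = "\<lambda>t. deriv f (of_real t * z) * z"])
      show "continuous_on {0..1} u"
        by (rule continuous_at_imp_continuous_on) (use has_vector_derivative_continuous[OF ud] in auto)
      show "continuous_on {0..1} \<phi>"
        by (rule continuous_at_imp_continuous_on) (use has_vector_derivative_continuous[OF phid] in auto)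
      fix t :: real assume t: "0 < t" "t < 1"
      show "(u has_vector_derivative deriv f (of_real t * z) * z) (at t)" using t by (intro ud) auto
      show "(\<phi> has_vector_derivative \<phi>' t) (at t)" using t by (intro phid) auto
      have n: "cmod (of_real t * z) = t * \<rho>" using t by (simp add: norm_mult \<rho>_def)
      have "cmod (deriv f (of_real t * z) * z) = cmod (deriv f (of_real t * z)) * \<rho>"
        by (simp add: norm_mult \<rho>_def)
      also have "\<dots> \<le> M * (1 - t * \<rho>) powr (- \<alpha>) * \<rho>"
        using dbound[OF inD[of t]] t n \<rho> by (intro mult_right_mono) auto
      also have "\<dots> \<le> \<phi>' t"
      proof -
        have p: "0 < 1 - t * \<rho>" "1 - t * \<rho> \<le> 1" using pos[of t] t \<rho> by auto
        have "(1 - t * \<rho>) powr (- \<alpha>) \<le> (1 - t * \<rho>) powr (\<delta> - \<alpha> - 1)"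
          using p d1 by (intro powr_mono') auto
        then show ?thesis unfolding \<phi>'_def using M0 \<rho>
          by (simp add: mult.assoc mult.commute[of \<rho>] mult_left_mono)
      qed
      finally show "cmod (deriv f (of_real t * z) * z) \<le> \<phi>' t" .
    qed simp
    moreover have "u 1 = f z" "u 0 = 0" using f0 by (auto simp: u_def)
    moreover have "\<phi> 1 - \<phi> 0 \<le> M / (\<alpha> - \<delta>) * (1 - cmod z) powr (\<delta> - \<alpha>)"
      using M0 da by (simp add: \<phi>_def \<rho>_def)
    ultimately show ?thesis by simp
  qed
qed



definition Qf :: "(complex \<Rightarrow> complex) \<Rightarrow> complex \<Rightarrow> complex" where
  "Qf H z = (if z = 0 then deriv H 0 else H z / z)"

lemma Qf_holo:
  assumes "H holomorphic_on unit_disc" "H 0 = 0"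
  shows "Qf H holomorphic_on unit_disc"
proof -
  have "(\<lambda>z. if z = 0 then deriv H 0 else (H z - H 0)/(z - 0)) holomorphic_on unit_disc"
    by (rule pole_lemma_open) (use assms in auto)
  moreover have "(\<lambda>z. if z = 0 then deriv H 0 else (H z - H 0)/(z - 0)) = Qf H"
    using assms by (auto simp: Qf_def fun_eq_iff)
  ultimately show ?thesis by simp
qed

lemma Qf_maxmod:
  assumes hol: "H holomorphic_on unit_disc" and H0: "H 0 = 0" and r: "0 < r" "r < 1"
    and E: "\<And>w. cmod w = r \<Longrightarrow> cmod (H w) \<le> E" and z: "cmod z \<le> r"
  shows "cmod (Qf H z) \<le> E / r"
proof (rule maximum_modulus_frontier[of "Qf H" "cball 0 r"])
  have sub: "cball 0 r \<subseteq> unit_disc" using r by auto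
  show "Qf H holomorphic_on interior (cball 0 r)"
  proof -
    have "ball 0 r \<subseteq> unit_disc" using r by (intro subset_ball) auto
    then show ?thesis using holomorphic_on_subset[OF Qf_holo[OF hol H0], of "ball 0 r"] by simp
  qed
  show "continuous_on (closure (cball 0 r)) (Qf H)"
    using Qf_holo[OF hol H0] sub by (auto intro: holomorphic_on_imp_continuous_on holomorphic_on_subset)
  show "bounded (cball (0::complex) r)" by simp
  show "z \<in> cball 0 r" using z by simp
  fix w :: complex assume "w \<in> frontier (cball 0 r)"
  then have w: "cmod w = r" using r by (simp add: frontier_cball)
  then have "w \<noteq> 0" using r by auto
  then show "cmod (Qf H w) \<le> E / r" using E[OF w] w r
    by (simp add: Qf_def norm_divide divide_right_mono)
qed

lemma linepath_spike:
  assumes "(q has_contour_integral I) (linepath 0 z)" "\<And>w. w \<noteq> 0 \<Longrightarrow> p w = q w"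
  shows "(p has_contour_integral I) (linepath 0 z)"
  using assms(1) unfolding has_contour_integral_def
proof (rule has_integral_spike_finite[rotated 2])
  show "finite {0::real}" by simp
  fix x :: real assume x: "x \<in> {0..1} - {0}"
  show "p (linepath 0 z x) * vector_derivative (linepath 0 z) (at x within {0..1}) =
        q (linepath 0 z x) * vector_derivative (linepath 0 z) (at x within {0..1})"
  proof (cases "z = 0")
    case True then show ?thesis using x by (simp add: vector_derivative_linepath_within)
  next
    case False
    then have "linepath 0 z x \<noteq> 0" using x by (auto simp: linepath_def)
    then show ?thesis using assms(2) by simp
  qed
qed

lemma cesaro_struct:
  assumes hol: "H holomorphic_on unit_disc" and H0: "H 0 = 0" and gh: "g holomorphic_on unit_disc"
  shows "\<And>z. z \<in> unit_disc \<Longrightarrow> ((\<lambda>w. H w * g w / w) has_contour_integral cesaro_op g H z) (linepath 0 z)"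
    and "\<And>z. z \<in> unit_disc \<Longrightarrow> (cesaro_op g H has_field_derivative Qf H z * g z) (at z)"
    and "cesaro_op g H 0 = 0"
proof -
  define q where "q = (\<lambda>w. Qf H w * g w)"
  have qh: "q holomorphic_on unit_disc" unfolding q_def by (intro holomorphic_intros Qf_holo hol H0 gh)
  obtain P where P: "\<And>x. x \<in> unit_disc \<Longrightarrow> (P has_field_derivative q x) (at x within unit_disc)"
    using holomorphic_convex_primitive'[OF convex_ball open_ball qh] by blast
  have hc: "((\<lambda>w. H w * g w / w) has_contour_integral (P z - P 0)) (linepath 0 z)" if z: "z \<in> unit_disc" for z
  proof (rule linepath_spike)
    have "closed_segment 0 z \<subseteq> unit_disc"
      using z by (intro closed_segment_subset convex_ball) auto
    then show "(q has_contour_integral (P z - P 0)) (linepath 0 z)"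
      using contour_integral_primitive[OF P, of "linepath 0 z"] by auto
    fix w :: complex assume "w \<noteq> 0"
    then show "H w * g w / w = q w" by (simp add: q_def Qf_def)
  qed
  have ceq: "cesaro_op g H z = P z - P 0" if "z \<in> unit_disc" for z
    unfolding cesaro_op_def using contour_integral_unique[OF hc[OF that]] .
  show "((\<lambda>w. H w * g w / w) has_contour_integral cesaro_op g H z) (linepath 0 z)" if "z \<in> unit_disc" for z
    using hc[OF that] ceq[OF that] by simp
  show "cesaro_op g H 0 = 0" using ceq[of 0] by simp
  show "(cesaro_op g H has_field_derivative Qf H z * g z) (at z)" if z: "z \<in> unit_disc" for z
  proof (rule has_field_derivative_transform_within_open[where S = unit_disc])
    have "(P has_field_derivative q z) (at z)" using P[OF z] at_within_open[OF z open_ball] by simp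
    from DERIV_diff[OF this DERIV_const[of "P 0"]]
    show "((\<lambda>w. P w - P 0) has_field_derivative Qf H z * g z) (at z)"
      by (simp add: q_def)
    show "open unit_disc" by simp
    show "z \<in> unit_disc" by (rule z)
    fix x :: complex assume "x \<in> unit_disc"
    then show "P x - P 0 = cesaro_op g H x" using ceq by simp
  qed
qed



lemma bloch_le:
  assumes "\<And>z. z \<in> unit_disc \<Longrightarrow> (F has_field_derivative d z) (at z)"
    and "\<And>z. z \<in> unit_disc \<Longrightarrow> (1 - (cmod z)\<^sup>2) powr \<alpha> * cmod (d z) \<le> B"
  shows "bloch_norm \<alpha> F \<le> ereal B"
  unfolding bloch_norm_def
proof (rule SUP_least)
  fix z :: complex assume z: "z \<in> unit_disc"
  have "deriv F z = d z" using assms(1)[OF z] by (rule DERIV_imp_deriv)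
  then show "ereal ((1 - (cmod z)\<^sup>2) powr \<alpha> * cmod (deriv F z)) \<le> ereal B"
    using assms(2)[OF z] by simp
qed

lemma bloch_nonneg: "0 \<le> bloch_norm \<alpha> F"
  unfolding bloch_norm_def
  by (rule SUP_upper2[of 0]) auto

lemma cesaro_pt_bound:
  fixes H gb :: "complex \<Rightarrow> complex"
  assumes hol: "H holomorphic_on unit_disc" and H0: "H 0 = 0"
    and Hg: "\<And>w. w \<in> unit_disc \<Longrightarrow> cmod (H w) \<le> M' * (1 - cmod w) powr (\<delta> - \<alpha>)"
    and gb: "\<And>w. w \<in> unit_disc \<Longrightarrow> cmod (gb w) \<le> A * (1 - cmod w) powr (- bp)"
    and A0: "A \<ge> 0" and M0: "M' \<ge> 0" and bp0: "bp \<ge> 0" and dbp: "\<delta> > bp" and a0: "\<alpha> > 0"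
    and r: "1/2 \<le> r" "r < 1" and E: "\<And>w. cmod w = r \<Longrightarrow> cmod (H w) \<le> E"
    and z: "z \<in> unit_disc"
  shows "(1 - (cmod z)\<^sup>2) powr \<alpha> * cmod (Qf H z * gb z)
          \<le> max (2 * E * A * (1 - r) powr (- bp)) (2 powr (\<alpha> + 1) * M' * A * (1 - r) powr (\<delta> - bp))"
proof -
  have z1: "cmod z < 1" using z by simp
  have t0: "0 < 1 - cmod z" using z1 by simp
  have gz: "cmod (gb z) \<le> A * (1 - cmod z) powr (- bp)" using gb[OF z] .
  show ?thesis
  proof (cases "cmod z \<le> r")
    case True
    have "cmod (H (complex_of_real r)) \<le> E" using E[of "of_real r"] r by simp
    then have E0: "0 \<le> E" by (meson norm_ge_zero order_trans)
    have q: "cmod (Qf H z) \<le> 2 * E"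
    proof -
      have "cmod (Qf H z) \<le> E / r" using Qf_maxmod[OF hol H0 _ r(2) E True] r by simp
      also have "\<dots> \<le> E / (1/2)" using r E0 by (intro divide_left_mono) auto
      finally show ?thesis by simp
    qed
    have p1: "(1 - (cmod z)\<^sup>2) powr \<alpha> \<le> 1"
    proof (rule powr_le1)
      show "0 \<le> \<alpha>" using a0 by simp
      have "(cmod z)\<^sup>2 \<le> 1" using z1 by (simp add: power_le_one)
      then show "\<bar>1 - (cmod z)\<^sup>2\<bar> \<le> 1" by simp
    qed
    have "(1 - cmod z) powr (- bp) \<le> (1 - r) powr (- bp)"
      by (rule powr_mono2') (use bp0 r True in auto)
    then have g2: "cmod (gb z) \<le> A * (1 - r) powr (- bp)"
      using gz A0 by (meson mult_left_mono order_trans)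
    have "(1 - (cmod z)\<^sup>2) powr \<alpha> * cmod (Qf H z * gb z) = (1 - (cmod z)\<^sup>2) powr \<alpha> * (cmod (Qf H z) * cmod (gb z))"
      by (simp add: norm_mult)
    also have "\<dots> \<le> 1 * (2 * E * (A * (1 - r) powr (- bp)))"
      by (intro mult_mono q g2 p1) (auto simp: E0)
    also have "\<dots> = 2 * E * A * (1 - r) powr (- bp)" by simp
    finally show ?thesis by simp
  next
    case False
    then have zr: "r < cmod z" by simp
    then have zn: "z \<noteq> 0" using r by auto
    have zh: "1/2 \<le> cmod z" using zr r by simp
    have q: "cmod (Qf H z) \<le> 2 * (M' * (1 - cmod z) powr (\<delta> - \<alpha>))"
    proof -
      have "cmod (Qf H z) = cmod (H z) / cmod z" using zn by (simp add: Qf_def norm_divide)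
      also have "\<dots> \<le> cmod (H z) / (1/2)" using zh by (intro divide_left_mono) auto
      also have "\<dots> = 2 * cmod (H z)" by simp
      also have "\<dots> \<le> 2 * (M' * (1 - cmod z) powr (\<delta> - \<alpha>))" using Hg[OF z] by simp
      finally show ?thesis .
    qed
    have p1: "(1 - (cmod z)\<^sup>2) powr \<alpha> \<le> 2 powr \<alpha> * (1 - cmod z) powr \<alpha>"
    proof -
      have "1 - (cmod z)\<^sup>2 = (1 + cmod z) * (1 - cmod z)" by (simp add: power2_eq_square algebra_simps)
      then have "(1 - (cmod z)\<^sup>2) powr \<alpha> = (1 + cmod z) powr \<alpha> * (1 - cmod z) powr \<alpha>"
        using t0 by (simp add: powr_mult)
      also have "\<dots> \<le> 2 powr \<alpha> * (1 - cmod z) powr \<alpha>"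
        by (intro mult_right_mono powr_mono2) (use a0 z1 in auto)
      finally show ?thesis .
    qed
    have "(1 - (cmod z)\<^sup>2) powr \<alpha> * cmod (Qf H z * gb z) = (1 - (cmod z)\<^sup>2) powr \<alpha> * (cmod (Qf H z) * cmod (gb z))"
      by (simp add: norm_mult)
    also have "\<dots> \<le> (2 powr \<alpha> * (1 - cmod z) powr \<alpha>) * ((2 * (M' * (1 - cmod z) powr (\<delta> - \<alpha>))) * (A * (1 - cmod z) powr (- bp)))"
      by (intro mult_mono q gz p1) (auto simp: M0 A0)
    also have "\<dots> = 2 powr (\<alpha> + 1) * M' * A * ((1 - cmod z) powr \<alpha> * (1 - cmod z) powr (\<delta> - \<alpha>) * (1 - cmod z) powr (- bp))"
      by (simp add: powr_add algebra_simps)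
    also have "(1 - cmod z) powr \<alpha> * (1 - cmod z) powr (\<delta> - \<alpha>) * (1 - cmod z) powr (- bp) = (1 - cmod z) powr (\<delta> - bp)"
      by (simp add: powr_add[symmetric])
    also have "2 powr (\<alpha> + 1) * M' * A * (1 - cmod z) powr (\<delta> - bp) \<le> 2 powr (\<alpha> + 1) * M' * A * (1 - r) powr (\<delta> - bp)"
      by (intro mult_left_mono powr_mono2) (use dbp zr z1 M0 A0 in auto)
    finally show ?thesis by simp
  qed
qed



lemma bloch0_intro:
  assumes "\<And>z. z \<in> unit_disc \<Longrightarrow> (F has_field_derivative d z) (at z)"
    and "\<And>z. z \<in> unit_disc \<Longrightarrow> (1 - (cmod z)\<^sup>2) powr \<alpha> * cmod (d z) \<le> B"
    and "F 0 = 0"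
  shows "F \<in> bloch0 \<alpha>"
proof -
  have "F holomorphic_on unit_disc"
    unfolding holomorphic_on_open[OF open_ball] using assms(1) by blast
  moreover have "bloch_norm \<alpha> F < \<infinity>"
  proof -
    have "bloch_norm \<alpha> F \<le> ereal B" using assms(1,2) by (rule bloch_le)
    moreover have "ereal B < \<infinity>" by simp
    ultimately show ?thesis by (rule le_less_trans)
  qed
  ultimately show ?thesis using assms(3) by (simp add: bloch0_def)
qed

lemma cesaro_bloch:
  fixes H gb :: "complex \<Rightarrow> complex"
  assumes hol: "H holomorphic_on unit_disc" and H0: "H 0 = 0"
    and Hg: "\<And>w. w \<in> unit_disc \<Longrightarrow> cmod (H w) \<le> M' * (1 - cmod w) powr (\<delta> - \<alpha>)"
    and gbh: "gb holomorphic_on unit_disc"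
    and gb: "\<And>w. w \<in> unit_disc \<Longrightarrow> cmod (gb w) \<le> A * (1 - cmod w) powr (- bp)"
    and A0: "A \<ge> 0" and M0: "M' \<ge> 0" and bp0: "bp \<ge> 0" and dbp: "\<delta> > bp" and a0: "\<alpha> > 0"
  shows "\<exists>B. \<forall>z\<in>unit_disc. (1 - (cmod z)\<^sup>2) powr \<alpha> * cmod (Qf H z * gb z) \<le> B"
proof -
  have E: "cmod (H w) \<le> M' * (1 - 1/2) powr (\<delta> - \<alpha>)" if "cmod w = 1/2" for w
    using Hg[of w] that by simp
  show ?thesis
  proof (intro exI ballI)
    fix z :: complex assume z: "z \<in> unit_disc"
    show "(1 - (cmod z)\<^sup>2) powr \<alpha> * cmod (Qf H z * gb z)
          \<le> max (2 * (M' * (1 - 1/2) powr (\<delta> - \<alpha>)) * A * (1 - 1/2) powr (- bp)) (2 powr (\<alpha> + 1) * M' * A * (1 - 1/2) powr (\<delta> - bp))"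
      by (rule cesaro_pt_bound[where r="1/2", OF hol H0 Hg gb A0 M0 bp0 dbp a0 _ _ E z]) auto
  qed
qed

lemma growth_ereal:
  assumes "f \<in> bloch0 \<alpha>"
  obtains M where "M \<ge> 0" "bloch_norm \<alpha> f \<le> ereal M"
proof -
  have "bloch_norm \<alpha> f < \<infinity>" using assms by (simp add: bloch0_def)
  moreover have "0 \<le> bloch_norm \<alpha> f" by (rule bloch_nonneg)
  ultimately obtain M where "bloch_norm \<alpha> f = ereal M" by (cases "bloch_norm \<alpha> f") auto
  with \<open>0 \<le> bloch_norm \<alpha> f\<close> show ?thesis using that by auto
qed

lemma cesaro_linear:
  assumes f: "f holomorphic_on unit_disc" "f 0 = 0" and g: "g holomorphic_on unit_disc" "g 0 = 0"
    and gbh: "gb holomorphic_on unit_disc" and z: "z \<in> unit_disc"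
  shows "cesaro_op gb (\<lambda>w. f w + g w) z = cesaro_op gb f z + cesaro_op gb g z"
    and "cesaro_op gb (\<lambda>w. c * f w) z = c * cesaro_op gb f z"
proof -
  note F = cesaro_struct(1)[OF f gbh z] and G = cesaro_struct(1)[OF g gbh z]
  have "((\<lambda>w. f w * gb w / w + g w * gb w / w) has_contour_integral (cesaro_op gb f z + cesaro_op gb g z)) (linepath 0 z)"
    by (rule has_contour_integral_add[OF F G])
  moreover have "(\<lambda>w. f w * gb w / w + g w * gb w / w) = (\<lambda>w. (f w + g w) * gb w / w)"
    by (simp add: fun_eq_iff add_divide_distrib distrib_right)
  ultimately show "cesaro_op gb (\<lambda>w. f w + g w) z = cesaro_op gb f z + cesaro_op gb g z"
    unfolding cesaro_op_def[of gb "\<lambda>w. f w + g w"] by (simp add: contour_integral_unique)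
  have "((\<lambda>w. c * (f w * gb w / w)) has_contour_integral (c * cesaro_op gb f z)) (linepath 0 z)"
    by (rule has_contour_integral_lmul[OF F])
  moreover have "(\<lambda>w. c * (f w * gb w / w)) = (\<lambda>w. (c * f w) * gb w / w)"
    by (simp add: fun_eq_iff)
  ultimately show "cesaro_op gb (\<lambda>w. c * f w) z = c * cesaro_op gb f z"
    unfolding cesaro_op_def[of gb "\<lambda>w. c * f w"] by (simp add: contour_integral_unique)
qed

lemma cesaro_cong:
  assumes "\<forall>z\<in>unit_disc. f z = g z" "z \<in> unit_disc"
  shows "cesaro_op gb f z = cesaro_op gb g z"
  unfolding cesaro_op_def
proof (rule contour_integral_eq)
  fix x assume "x \<in> path_image (linepath 0 z)"
  moreover have "closed_segment 0 z \<subseteq> unit_disc"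
    using assms(2) by (intro closed_segment_subset convex_ball) auto
  ultimately have "x \<in> unit_disc" by auto
  then show "f x * gb x / x = g x * gb x / x" using assms(1) by simp
qed



lemma ereal_tendsto_zeroI:
  fixes X :: "nat \<Rightarrow> ereal"
  assumes nn: "\<And>n. 0 \<le> X n" and sm: "\<And>e. e > 0 \<Longrightarrow> \<forall>\<^sub>F n in sequentially. X n \<le> ereal e"
  shows "(X \<longlongrightarrow> 0) sequentially"
proof (rule order_tendstoI)
  fix a :: ereal assume "a < 0"
  then have "a < X n" for n using nn[of n] by (rule less_le_trans)
  then show "\<forall>\<^sub>F n in sequentially. a < X n" by simp
next
  fix a :: ereal assume a: "0 < a"
  obtain e where e: "0 < e" "ereal e < a"
  proof (cases a)
    case (real x)
    then show ?thesis using a that[of "x/2"] by auto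
  next
    case PInf
    then show ?thesis using that[of 1] by auto
  next
    case MInf
    then show ?thesis using a by auto
  qed
  show "\<forall>\<^sub>F n in sequentially. X n < a"
    using sm[OF e(1)] by eventually_elim (use e in auto)
qed

lemma neg_bloch0:
  assumes "\<And>z. z \<in> unit_disc \<Longrightarrow> (F has_field_derivative d z) (at z)"
    and "\<And>z. z \<in> unit_disc \<Longrightarrow> (1 - (cmod z)\<^sup>2) powr \<alpha> * cmod (d z) \<le> B"
    and "F 0 = 0"
  shows "(\<lambda>z. - F z) \<in> bloch0 \<alpha>"
proof (rule bloch0_intro[where d = "\<lambda>z. - d z" and B = B])
  fix z :: complex assume z: "z \<in> unit_disc"
  show "((\<lambda>z. - F z) has_field_derivative - d z) (at z)" using assms(1)[OF z] by (rule DERIV_minus)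
  show "(1 - (cmod z)\<^sup>2) powr \<alpha> * cmod (- d z) \<le> B" using assms(2)[OF z] by simp
qed (use assms(3) in simp)



theorem corollary4p1:
  fixes \<alpha> \<beta> :: real and k :: nat and a b :: "nat \<Rightarrow> complex" and h :: "complex \<Rightarrow> complex"
  assumes "\<alpha> > 0"
    and "(\<beta> < \<alpha> \<and> \<alpha> < 1) \<or> (\<beta> < 1 \<and> 1 < \<alpha>) \<or> (\<beta> < \<alpha> \<and> \<alpha> = 1)"
    and "k \<ge> 1"
    and "inj_on b {..<k}"
    and "\<forall>j<k. cmod (b j) = 1"
    and "\<forall>j<k. a j \<noteq> 0"
    and "h holomorphic_on unit_disc"
    and "bounded (h ` unit_disc)"
  shows "(\<forall>f\<in>bloch0 \<alpha>. cesaro_op (g_beta \<beta> k a b h) f \<in> bloch0 \<alpha>) \<and>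
         ess_norm \<alpha> (cesaro_op (g_beta \<beta> k a b h)) = 0"
proof -
  define gb where "gb = g_beta \<beta> k a b h"
  define T where "T = cesaro_op gb"
  define bp where "bp = max \<beta> 0"
  have gbh: "gb holomorphic_on unit_disc" unfolding gb_def by (rule g_beta_holo) (use assms in auto)
  obtain A where A0: "A \<ge> 0" and gA: "\<And>z. z \<in> unit_disc \<Longrightarrow> cmod (gb z) \<le> A * (1 - cmod z) powr (- bp)"
    using g_beta_bound[of k b h \<beta> a] assms(5,8) unfolding gb_def bp_def by blast
  have bpm: "bp < min \<alpha> 1" using assms(1,2) by (auto simp: bp_def)
  have bp0: "bp \<ge> 0" by (simp add: bp_def)
  define \<delta> where "\<delta> = (bp + min \<alpha> 1) / 2"
  have d: "bp < \<delta>" "\<delta> < \<alpha>" "\<delta> \<le> 1" "0 < \<delta>" using bpm bp0 by (auto simp: \<delta>_def)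
  have a0: "\<alpha> > 0" by (rule assms(1))
  have Tder: "(T H has_field_derivative Qf H z * gb z) (at z)"
    if "H holomorphic_on unit_disc" "H 0 = 0" "z \<in> unit_disc" for H z
    unfolding T_def using cesaro_struct(2)[OF that(1,2) gbh that(3)] .
  have T0: "T H 0 = 0" if "H holomorphic_on unit_disc" "H 0 = 0" for H
    unfolding T_def using cesaro_struct(3)[OF that gbh] .
  have Tin: "T H \<in> bloch0 \<alpha> \<and> (\<lambda>z. - T H z) \<in> bloch0 \<alpha>"
    if H: "H holomorphic_on unit_disc" "H 0 = 0" and M: "M' \<ge> 0"
      and Hg: "\<And>w. w \<in> unit_disc \<Longrightarrow> cmod (H w) \<le> M' * (1 - cmod w) powr (\<delta> - \<alpha>)" for H M'
  proof -
    obtain B where B: "\<forall>z\<in>unit_disc. (1 - (cmod z)\<^sup>2) powr \<alpha> * cmod (Qf H z * gb z) \<le> B"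
      using cesaro_bloch[OF H Hg gbh gA A0 M bp0 d(1) a0] by blast
    have "T H \<in> bloch0 \<alpha>"
      by (rule bloch0_intro[where d = "\<lambda>z. Qf H z * gb z" and B = B]) (use Tder[OF H] B T0[OF H] in auto)
    moreover have "(\<lambda>z. - T H z) \<in> bloch0 \<alpha>"
      by (rule neg_bloch0[where d = "\<lambda>z. Qf H z * gb z" and B = B]) (use Tder[OF H] B T0[OF H] in auto)
    ultimately show ?thesis by blast
  qed
  have growthM: "\<exists>M'\<ge>0. \<forall>w\<in>unit_disc. cmod (f w) \<le> M' * (1 - cmod w) powr (\<delta> - \<alpha>)"
    if f: "f \<in> bloch0 \<alpha>" for f
  proof -
    obtain M where M: "M \<ge> 0" "bloch_norm \<alpha> f \<le> ereal M" using growth_ereal[OF f] by blast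
    have fh: "f holomorphic_on unit_disc" "f 0 = 0" using f by (auto simp: bloch0_def)
    show ?thesis
      using growth[OF fh M(2) d(4) d(2) d(3)] M(1) d(2) by (intro exI[of _ "M / (\<alpha> - \<delta>)"]) auto
  qed
  have part1: "\<forall>f\<in>bloch0 \<alpha>. T f \<in> bloch0 \<alpha>"
  proof
    fix f assume f: "f \<in> bloch0 \<alpha>"
    obtain M' where "M' \<ge> 0" "\<forall>w\<in>unit_disc. cmod (f w) \<le> M' * (1 - cmod w) powr (\<delta> - \<alpha>)"
      using growthM[OF f] by blast
    moreover have "f holomorphic_on unit_disc" "f 0 = 0" using f by (auto simp: bloch0_def)
    ultimately show "T f \<in> bloch0 \<alpha>" using Tin by blast
  qed
  define K where "K = (\<lambda>(f::complex \<Rightarrow> complex) z. - T f z)"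
  have hol0: "f holomorphic_on unit_disc" "f 0 = 0" if "f \<in> bloch0 \<alpha>" for f
    using that by (auto simp: bloch0_def)
  have C1: "\<forall>f\<in>bloch0 \<alpha>. K f \<in> bloch0 \<alpha>"
  proof
    fix f assume f: "f \<in> bloch0 \<alpha>"
    obtain M' where "M' \<ge> 0" "\<forall>w\<in>unit_disc. cmod (f w) \<le> M' * (1 - cmod w) powr (\<delta> - \<alpha>)"
      using growthM[OF f] by blast
    then show "K f \<in> bloch0 \<alpha>" using Tin[OF hol0[OF f]] unfolding K_def by blast
  qed
  have C2: "\<forall>f\<in>bloch0 \<alpha>. \<forall>g\<in>bloch0 \<alpha>. (\<forall>z\<in>unit_disc. f z = g z) \<longrightarrow> (\<forall>z\<in>unit_disc. K f z = K g z)"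
    unfolding K_def T_def using cesaro_cong by metis
  have C3: "\<forall>f\<in>bloch0 \<alpha>. \<forall>g\<in>bloch0 \<alpha>. \<forall>z\<in>unit_disc. K (\<lambda>w. f w + g w) z = K f z + K g z"
  proof (intro ballI)
    fix f g z assume "f \<in> bloch0 \<alpha>" "g \<in> bloch0 \<alpha>" "z \<in> unit_disc"
    then show "K (\<lambda>w. f w + g w) z = K f z + K g z"
      unfolding K_def T_def using cesaro_linear(1)[OF hol0(1,2)[of f] hol0(1,2)[of g] gbh] by simp
  qed
  have C4: "\<forall>f\<in>bloch0 \<alpha>. \<forall>c. \<forall>z\<in>unit_disc. K (\<lambda>w. c * f w) z = c * K f z"
  proof (intro ballI allI)
    fix f c z assume "f \<in> bloch0 \<alpha>" "z \<in> unit_disc"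
    then show "K (\<lambda>w. c * f w) z = c * K f z"
      unfolding K_def T_def using cesaro_linear(2)[OF hol0(1,2)[of f] hol0(1,2)[of f] gbh] by simp
  qed
  have C5: "\<exists>r g. strict_mono r \<and> g \<in> bloch0 \<alpha> \<and>
           ((\<lambda>n. bloch_norm \<alpha> (\<lambda>z. K (F (r n)) z - g z)) \<longlongrightarrow> 0) sequentially"
    if HF: "\<forall>n::nat. F n \<in> bloch0 \<alpha> \<and> bloch_norm \<alpha> (F n) \<le> 1" for F
  proof -
    define C0 where "C0 = 1 / (\<alpha> - \<delta>)"
    have C0p: "C0 \<ge> 0" using d(2) by (simp add: C0_def)
    have Fh: "F n holomorphic_on unit_disc" "F n 0 = 0" for n using HF hol0 by blast+
    have Fb: "bloch_norm \<alpha> (F n) \<le> ereal 1" for n using HF by (simp add: one_ereal_def)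
    have Fg: "cmod (F n w) \<le> C0 * (1 - cmod w) powr (\<delta> - \<alpha>)" if "w \<in> unit_disc" for n w
      using growth[OF Fh(1,2)[of n] Fb[of n] d(4) d(2) d(3) that] by (simp add: C0_def)
    define HH where "HH = {f. f holomorphic_on unit_disc \<and> (\<forall>w\<in>unit_disc. cmod (f w) \<le> C0 * (1 - cmod w) powr (\<delta> - \<alpha>))}"
    obtain G r where G: "G holomorphic_on unit_disc" "strict_mono (r :: nat \<Rightarrow> nat)"
        "\<And>x. x \<in> unit_disc \<Longrightarrow> ((\<lambda>n. F (r n) x) \<longlongrightarrow> G x) sequentially"
        "\<And>Kc. \<lbrakk>compact Kc; Kc \<subseteq> unit_disc\<rbrakk> \<Longrightarrow> uniform_limit Kc (F \<circ> r) G sequentially"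
    proof (rule Montel[of unit_disc HH F])
      show "open unit_disc" by simp
      show "\<And>h. h \<in> HH \<Longrightarrow> h holomorphic_on unit_disc" by (simp add: HH_def)
      show "range F \<subseteq> HH" using Fh Fg by (auto simp: HH_def)
      fix Kc :: "complex set" assume Kc: "compact Kc" "Kc \<subseteq> unit_disc"
      show "\<exists>B. \<forall>h\<in>HH. \<forall>z\<in>Kc. cmod (h z) \<le> B"
      proof (cases "Kc = {}")
        case True then show ?thesis by auto
      next
        case False
        obtain m where m: "m \<in> Kc" "\<And>y. y \<in> Kc \<Longrightarrow> cmod y \<le> cmod m"
          using continuous_attains_sup[OF Kc(1) False, of cmod] by (auto intro: continuous_intros)
        have m1: "cmod m < 1" using m(1) Kc(2) by auto
        show ?thesis
        proof (intro exI ballI)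
          fix hh z assume hh: "hh \<in> HH" and z: "z \<in> Kc"
          have "cmod (hh z) \<le> C0 * (1 - cmod z) powr (\<delta> - \<alpha>)" using hh z Kc(2) by (auto simp: HH_def)
          also have "\<dots> \<le> C0 * (1 - cmod m) powr (\<delta> - \<alpha>)"
            by (intro mult_left_mono C0p powr_mono2') (use d m1 m(2)[OF z] in auto)
          finally show "cmod (hh z) \<le> C0 * (1 - cmod m) powr (\<delta> - \<alpha>)" .
        qed
      qed
    qed blast
    have G0: "G 0 = 0"
    proof -
      have "((\<lambda>n. F (r n) 0) \<longlongrightarrow> G 0) sequentially" using G(3)[of 0] by simp
      moreover have "(\<lambda>n. F (r n) 0) = (\<lambda>n. 0)" using Fh(2) by simp
      ultimately show ?thesis using LIMSEQ_unique tendsto_const by metis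
    qed
    have Gg: "cmod (G w) \<le> C0 * (1 - cmod w) powr (\<delta> - \<alpha>)" if w: "w \<in> unit_disc" for w
      by (rule LIMSEQ_le_const2[OF tendsto_norm[OF G(3)[OF w]]]) (use Fg[OF w] in auto)
    define g where "g = (\<lambda>z. - T G z)"
    have gin: "g \<in> bloch0 \<alpha>" unfolding g_def using Tin[OF G(1) G0 C0p Gg] by blast
    define Hn where "Hn = (\<lambda>n w. G w - F (r n) w)"
    have Hh: "Hn n holomorphic_on unit_disc" "Hn n 0 = 0" for n
      unfolding Hn_def using G(1) Fh G0 by (auto intro!: holomorphic_intros)
    have Hg: "cmod (Hn n w) \<le> (2 * C0) * (1 - cmod w) powr (\<delta> - \<alpha>)" if w: "w \<in> unit_disc" for n w
    proof -
      have "cmod (Hn n w) \<le> cmod (G w) + cmod (F (r n) w)" unfolding Hn_def by (rule norm_triangle_ineq4)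
      also have "\<dots> \<le> (2 * C0) * (1 - cmod w) powr (\<delta> - \<alpha>)" using Gg[OF w] Fg[OF w, of "r n"] by simp
      finally show ?thesis .
    qed
    have Hder: "((\<lambda>z. K (F (r n)) z - g z) has_field_derivative Qf (Hn n) z * gb z) (at z)"
      if z: "z \<in> unit_disc" for n z
    proof -
      have "((\<lambda>z. - T (F (r n)) z - - T G z) has_field_derivative
              - (Qf (F (r n)) z * gb z) - - (Qf G z * gb z)) (at z)"
        by (intro DERIV_diff DERIV_minus Tder Fh G(1) G0 z)
      moreover have "Qf (Hn n) z = Qf G z - Qf (F (r n)) z"
      proof (cases "z = 0")
        case True
        have "G field_differentiable at 0" "F (r n) field_differentiable at 0"
          using holomorphic_on_imp_differentiable_at[OF G(1) open_ball, of 0]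
                holomorphic_on_imp_differentiable_at[OF Fh(1) open_ball, of 0] by auto
        then show ?thesis using True unfolding Qf_def Hn_def by simp
      next
        case False then show ?thesis unfolding Qf_def Hn_def by (simp add: diff_divide_distrib)
      qed
      ultimately have D: "((\<lambda>z. - T (F (r n)) z - - T G z) has_field_derivative
              - (Qf (F (r n)) z * gb z) - - (Qf G z * gb z)) (at z)"
        and Q: "Qf (Hn n) z = Qf G z - Qf (F (r n)) z" by blast+
      have "- (Qf (F (r n)) z * gb z) - - (Qf G z * gb z) = Qf (Hn n) z * gb z"
        unfolding Q by (simp add: algebra_simps)
      moreover have "(\<lambda>z. K (F (r n)) z - g z) = (\<lambda>z. - T (F (r n)) z - - T G z)"
        by (simp add: K_def g_def)
      ultimately show ?thesis using D by simp
    qed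
    show ?thesis
    proof (intro exI conjI)
      show "strict_mono r" by (rule G(2))
      show "g \<in> bloch0 \<alpha>" by (rule gin)
      show "((\<lambda>n. bloch_norm \<alpha> (\<lambda>z. K (F (r n)) z - g z)) \<longlongrightarrow> 0) sequentially"
      proof (rule ereal_tendsto_zeroI)
        show "0 \<le> bloch_norm \<alpha> (\<lambda>z. K (F (r n)) z - g z)" for n by (rule bloch_nonneg)
        fix e :: real assume e: "e > 0"
        define \<kappa> where "\<kappa> = 2 powr (\<alpha> + 1) * (2 * C0) * A + 1"
        have "0 \<le> 2 powr (\<alpha> + 1) * (2 * C0) * A" using C0p A0 by simp
        then have \<kappa>: "\<kappa> > 0" unfolding \<kappa>_def by linarith
        define \<eta> where "\<eta> = \<delta> - bp"
        have \<eta>: "\<eta> > 0" using d by (simp add: \<eta>_def)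
        define t where "t = min (1/2) ((e / (2 * \<kappa>)) powr (1 / \<eta>))"
        have t: "0 < t" "t \<le> 1/2" using e \<kappa> by (auto simp: t_def)
        have "t powr \<eta> \<le> ((e / (2 * \<kappa>)) powr (1 / \<eta>)) powr \<eta>"
          by (rule powr_mono2) (use \<eta> t in \<open>auto simp: t_def\<close>)
        also have "\<dots> = e / (2 * \<kappa>)" using \<eta> e \<kappa> by (simp add: powr_powr)
        finally have tp: "t powr \<eta> \<le> e / (2 * \<kappa>)" .
        define r0 where "r0 = 1 - t"
        have r0: "1/2 \<le> r0" "r0 < 1" "1 - r0 = t" using t by (auto simp: r0_def)
        define lam where "lam = 2 * A * t powr (- bp) + 1"
        have "0 \<le> 2 * A * t powr (- bp)" using A0 by simp
        then have lam: "lam > 0" unfolding lam_def by linarith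
        define E where "E = e / (2 * lam)"
        have E: "E > 0" using e lam by (simp add: E_def)
        have sub: "cball 0 r0 \<subseteq> unit_disc" using r0 by auto
        have ev: "\<forall>\<^sub>F n in sequentially. \<forall>x\<in>cball 0 r0. dist ((F \<circ> r) n x) (G x) < E"
          by (rule uniform_limitD[OF G(4)[OF compact_cball sub] E])
        have b1: "2 * E * A * (1 - r0) powr (- bp) \<le> e / 2"
        proof -
          have "2 * E * A * (1 - r0) powr (- bp) = E * (lam - 1)" unfolding lam_def r0(3) by simp
          also have "\<dots> \<le> E * lam" using E by simp
          also have "\<dots> = e / 2" unfolding E_def using lam by simp
          finally show ?thesis .
        qed
        have b2: "2 powr (\<alpha> + 1) * (2 * C0) * A * (1 - r0) powr (\<delta> - bp) \<le> e / 2"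
        proof -
          have "2 powr (\<alpha> + 1) * (2 * C0) * A * (1 - r0) powr (\<delta> - bp) = (\<kappa> - 1) * t powr \<eta>"
            unfolding \<kappa>_def \<eta>_def r0(3) by simp
          also have "\<dots> \<le> \<kappa> * t powr \<eta>" by (intro mult_right_mono) auto
          also have "\<dots> \<le> \<kappa> * (e / (2 * \<kappa>))" using tp \<kappa> by (intro mult_left_mono) auto
          also have "\<dots> = e / 2" using \<kappa> by simp
          finally show ?thesis .
        qed
        show "\<forall>\<^sub>F n in sequentially. bloch_norm \<alpha> (\<lambda>z. K (F (r n)) z - g z) \<le> ereal e"
          using ev
        proof eventually_elim
          case (elim n)
          have HE: "cmod (Hn n w) \<le> E" if w: "cmod w = r0" for w
          proof -
            have "w \<in> cball 0 r0" using w by simp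
            then have "dist (F (r n) w) (G w) < E" using elim by auto
            then show ?thesis unfolding Hn_def by (simp add: dist_norm norm_minus_commute)
          qed
          have "bloch_norm \<alpha> (\<lambda>z. K (F (r n)) z - g z)
                 \<le> ereal (max (2 * E * A * (1 - r0) powr (- bp)) (2 powr (\<alpha> + 1) * (2 * C0) * A * (1 - r0) powr (\<delta> - bp)))"
          proof (rule bloch_le[where d = "\<lambda>z. Qf (Hn n) z * gb z"])
            fix z :: complex assume z: "z \<in> unit_disc"
            show "((\<lambda>z. K (F (r n)) z - g z) has_field_derivative Qf (Hn n) z * gb z) (at z)"
              by (rule Hder[OF z])
            show "(1 - (cmod z)\<^sup>2) powr \<alpha> * cmod (Qf (Hn n) z * gb z)
                  \<le> max (2 * E * A * (1 - r0) powr (- bp)) (2 powr (\<alpha> + 1) * (2 * C0) * A * (1 - r0) powr (\<delta> - bp))"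
              by (rule cesaro_pt_bound[OF Hh(1,2)[of n] Hg gA A0 _ bp0 d(1) a0 r0(1,2) HE z]) (use C0p in auto)
          qed
          also have "\<dots> \<le> ereal e" using b1 b2 e by simp
          finally show ?case .
        qed
      qed
    qed
  qed
  have cK: "compact_op \<alpha> K" unfolding compact_op_def using C1 C2 C3 C4 C5 by blast
  have z0: "bloch_norm \<alpha> (\<lambda>z. 0) = 0" unfolding bloch_norm_def by simp
  have zin: "(\<lambda>z. 0) \<in> {f \<in> bloch0 \<alpha>. bloch_norm \<alpha> f \<le> 1}"
    using z0 by (simp add: bloch0_def)
  have opnn: "0 \<le> op_norm \<alpha> Q" for Q
    unfolding op_norm_def by (rule SUP_upper2[OF zin]) (rule bloch_nonneg)
  have e: "(\<lambda>z. T f z + K f z) = (\<lambda>z. 0)" for f by (simp add: K_def)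
  have "op_norm \<alpha> (\<lambda>f z. T f z + K f z) = (SUP f\<in>{f \<in> bloch0 \<alpha>. bloch_norm \<alpha> f \<le> 1}. (0::ereal))"
    unfolding op_norm_def e z0 ..
  also have "\<dots> = 0" using zin by (intro SUP_const) auto
  finally have op0: "op_norm \<alpha> (\<lambda>f z. T f z + K f z) = 0" .
  have "ess_norm \<alpha> T \<le> 0"
    unfolding ess_norm_def by (rule INF_lower2[of K]) (use cK op0 in auto)
  moreover have "0 \<le> ess_norm \<alpha> T"
    unfolding ess_norm_def by (rule INF_greatest) (rule opnn)
  ultimately have "ess_norm \<alpha> T = 0" by (rule antisym)
  then show ?thesis using part1 unfolding T_def gb_def by simp
qed


end
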